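(* Let $\tau>0$, $a\in\mathbb{R}$, $\varepsilon>0$, and let $v:[0,\tau]\times\mathbb{R}\to\mathbb{R}$ satisfy: (i) for every $t\in[0,\tau]$, the function $x\mapsto v(t,x)$ is decreasing (nonincreasing); (ii) for every Lipschitz curve $t\mapsto\gamma(t)$ with $\dot\gamma(t)\ge a-\varepsilon$, the function $t\mapsto v(t,\gamma(t))$ is decreasing (nonincreasing). Let $y,z:[0,\tau]\to\mathbb{R}$ be Lipschitz with $y(0)=z(0)=0$ and $\dot y(t)\ge a$, $\dot z(t)\ge a$ for a.e. $t\in[0,\tau]$. Define $v_{max}=\sup_{t,x}v(t,x)$, $v_{min}=\inf_{t,x}v(t,x)$ and $\delta(t)=\sup_{0<s<t}|y(s)-z(s)|$. Then for every $t\in[0,\tau]$, $$\int_0^t\big|v(s,y(s))-v(s,z(s))\big|\,ds\;\le\;2\delta(t)\cdot\frac{v_{max}-v_{min}}{\varepsilon}.$$ *)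

theory Defs
  imports "HOL-Analysis.Analysis"
begin

definition lip_curve_slope_ge :: "real \<Rightarrow> real \<Rightarrow> (real \<Rightarrow> real) \<Rightarrow> bool" where
  "lip_curve_slope_ge tau c g \<longleftrightarrow>
     (\<exists>L. L-lipschitz_on {0..tau} g) \<and>
     (AE t in lborel. t \<in> {0<..<tau} \<longrightarrow>
        (\<exists>D. (g has_real_derivative D) (at t) \<and> D \<ge> c))"

definition vmax :: "real \<Rightarrow> (real \<Rightarrow> real \<Rightarrow> real) \<Rightarrow> ereal" where
  "vmax tau v = (SUP p \<in> {0..tau} \<times> UNIV. ereal (v (fst p) (snd p)))"

definition vmin :: "real \<Rightarrow> (real \<Rightarrow> real \<Rightarrow> real) \<Rightarrow> ereal" where
  "vmin tau v = (INF p \<in> {0..tau} \<times> UNIV. ereal (v (fst p) (snd p)))"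

text \<open>delta(t) = sup over 0<s<t of |y s - z s|, with the convention sup of the empty set = 0.\<close>
definition delta :: "(real \<Rightarrow> real) \<Rightarrow> (real \<Rightarrow> real) \<Rightarrow> real \<Rightarrow> ereal" where
  "delta y z t = max 0 (SUP s \<in> {0<..<t}. ereal \<bar>y s - z s\<bar>)"

end

theory Submission
  imports Defs
begin

lemma curve_shift:
  assumes "lip_curve_slope_ge tau c g" "c' \<le> c + k"
  shows "lip_curve_slope_ge tau c' (\<lambda>s. g s + k * s + b)"
proof -
  obtain L where L: "L-lipschitz_on {0..tau} g" using assms(1) unfolding lip_curve_slope_ge_def by blast
  have "(L + \<bar>k\<bar>)-lipschitz_on {0..tau} (\<lambda>s. g s + k * s + b)"
  proof (rule lipschitz_onI)
    fix x y assume xy: "x \<in> {0..tau}" "y \<in> {0..tau}"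
    have "dist (g x + k * x + b) (g y + k * y + b) \<le> dist (g x) (g y) + \<bar>k\<bar> * dist x y"
      by (simp add: dist_real_def abs_mult[symmetric] algebra_simps)
    also have "\<dots> \<le> L * dist x y + \<bar>k\<bar> * dist x y" using lipschitz_onD[OF L xy] by simp
    finally show "dist (g x + k * x + b) (g y + k * y + b) \<le> (L + \<bar>k\<bar>) * dist x y"
      by (simp add: algebra_simps)
  next
    show "0 \<le> L + \<bar>k\<bar>" using lipschitz_on_nonneg[OF L] by simp
  qed
  moreover have "AE t in lborel. t \<in> {0<..<tau} \<longrightarrow>
        (\<exists>D. ((\<lambda>s. g s + k * s + b) has_real_derivative D) (at t) \<and> D \<ge> c')"
  proof -
    have A: "AE t in lborel. t \<in> {0<..<tau} \<longrightarrow> (\<exists>D. (g has_real_derivative D) (at t) \<and> D \<ge> c)"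
      using assms(1) unfolding lip_curve_slope_ge_def by blast
    show ?thesis
    proof (rule AE_mp[OF A], intro AE_I2 impI)
      fix t assume h: "t \<in> {0<..<tau} \<longrightarrow> (\<exists>D. (g has_real_derivative D) (at t) \<and> c \<le> D)"
        and t: "t \<in> {0<..<tau}"
      then obtain D where D: "(g has_real_derivative D) (at t)" "c \<le> D" by blast
      have "((\<lambda>s. g s + k * s + b) has_real_derivative D + k) (at t)"
        using D(1) by (auto intro!: derivative_eq_intros)
      then show "\<exists>D. ((\<lambda>s. g s + k * s + b) has_real_derivative D) (at t) \<and> c' \<le> D"
        using D(2) assms(2) by (intro exI[of _ "D+k"]) auto
    qed
  qed
  ultimately show ?thesis unfolding lip_curve_slope_ge_def by blast
qed

lemma decr_integrable:
  fixes f :: "real \<Rightarrow> real"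
  assumes "\<And>s1 s2. s1 \<in> {0..tau} \<Longrightarrow> s2 \<in> {0..tau} \<Longrightarrow> s1 \<le> s2 \<Longrightarrow> f s2 \<le> f s1"
    and "{a..b} \<subseteq> {0..tau}"
  shows "f integrable_on {a..b}"
proof -
  have "mono_on {a..b} (\<lambda>s. - f s)"
    using assms by (intro mono_onI) (smt (verit) atLeastAtMost_iff subsetD)
  then have "(\<lambda>s. - f s) integrable_on {a..b}" by (rule integrable_on_mono_on)
  then have "(\<lambda>s. - (- f s)) integrable_on {a..b}" by (rule integrable_neg)
  then show ?thesis by simp
qed

lemma main_real:
  fixes tau a eps :: real and v :: "real \<Rightarrow> real \<Rightarrow> real" and y z :: "real \<Rightarrow> real"
  assumes tau: "tau > 0" and eps: "eps > 0"
    and mono_x: "\<And>t x1 x2. t \<in> {0..tau} \<Longrightarrow> x1 \<le> x2 \<Longrightarrow> v t x2 \<le> v t x1"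
    and mono_curve: "\<And>g s1 s2. lip_curve_slope_ge tau (a - eps) g \<Longrightarrow>
            s1 \<in> {0..tau} \<Longrightarrow> s2 \<in> {0..tau} \<Longrightarrow> s1 \<le> s2 \<Longrightarrow>
            v s2 (g s2) \<le> v s1 (g s1)"
    and y: "lip_curve_slope_ge tau a y" and z: "lip_curve_slope_ge tau a z"
    and y0: "y 0 = 0"
    and t: "t \<in> {0..tau}"
    and d: "d > 0" and hd: "\<And>s. s \<in> {0<..<t} \<Longrightarrow> \<bar>y s - z s\<bar> \<le> d"
    and M: "\<And>s. s \<in> {0..tau} \<Longrightarrow> v s (y s - d) \<le> M"
    and m: "\<And>s. s \<in> {0..tau} \<Longrightarrow> m \<le> v s (y s + d)"
  shows "integral {0..t} (\<lambda>s. \<bar>v s (y s) - v s (z s)\<bar>) \<le> 2 * d * (M - m) / eps"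
proof -
  define F where "F s = v s (y s - d)" for s
  define G where "G s = v s (y s + d)" for s
  define P where "P s = v s (y s)" for s
  define Q where "Q s = v s (z s)" for s
  define h where "h = 2 * d / eps"
  have h0: "h > 0" using d eps by (simp add: h_def)
  have eh: "eps * h = 2 * d" using eps by (simp add: h_def)
  have t0: "0 \<le> t" "t \<le> tau" using t by auto
  have cF: "lip_curve_slope_ge tau (a - eps) (\<lambda>s. y s - d)"
    using curve_shift[OF y, of "a - eps" 0 "-d"] eps by simp
  have cG: "lip_curve_slope_ge tau (a - eps) (\<lambda>s. y s + d)"
    using curve_shift[OF y, of "a - eps" 0 "d"] eps by simp
  have cP: "lip_curve_slope_ge tau (a - eps) y"
    using curve_shift[OF y, of "a - eps" 0 0] eps by simp
  have cQ: "lip_curve_slope_ge tau (a - eps) z"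
    using curve_shift[OF z, of "a - eps" 0 0] eps by simp
  have Fd: "F s2 \<le> F s1" if "s1 \<in> {0..tau}" "s2 \<in> {0..tau}" "s1 \<le> s2" for s1 s2
    using mono_curve[OF cF that] by (simp add: F_def)
  have Gd: "G s2 \<le> G s1" if "s1 \<in> {0..tau}" "s2 \<in> {0..tau}" "s1 \<le> s2" for s1 s2
    using mono_curve[OF cG that] by (simp add: G_def)
  have Pd: "P s2 \<le> P s1" if "s1 \<in> {0..tau}" "s2 \<in> {0..tau}" "s1 \<le> s2" for s1 s2
    using mono_curve[OF cP that] by (simp add: P_def)
  have Qd: "Q s2 \<le> Q s1" if "s1 \<in> {0..tau}" "s2 \<in> {0..tau}" "s1 \<le> s2" for s1 s2
    using mono_curve[OF cQ that] by (simp add: Q_def)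
  have maxd: "max (P s2) (Q s2) \<le> max (P s1) (Q s1)" if "s1 \<in> {0..tau}" "s2 \<in> {0..tau}" "s1 \<le> s2" for s1 s2
    using Pd[OF that] Qd[OF that] by linarith
  have mind: "min (P s2) (Q s2) \<le> min (P s1) (Q s1)" if "s1 \<in> {0..tau}" "s2 \<in> {0..tau}" "s1 \<le> s2" for s1 s2
    using Pd[OF that] Qd[OF that] by linarith
  have sub: "{a'..b'} \<subseteq> {0..tau}" if "0 \<le> a'" "b' \<le> t" for a' b' using that t0 by auto
  have iF: "F integrable_on {a'..b'}" if "0 \<le> a'" "b' \<le> t" for a' b'
    by (rule decr_integrable[OF Fd sub[OF that]]) auto
  have iG: "G integrable_on {a'..b'}" if "0 \<le> a'" "b' \<le> t" for a' b'
    by (rule decr_integrable[OF Gd sub[OF that]]) auto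
  have imax: "(\<lambda>s. max (P s) (Q s)) integrable_on {0..t}"
    by (rule decr_integrable[OF maxd sub]) auto
  have imin: "(\<lambda>s. min (P s) (Q s)) integrable_on {0..t}"
    by (rule decr_integrable[OF mind sub]) auto
  have absPQ: "(\<lambda>s. \<bar>P s - Q s\<bar>) = (\<lambda>s. max (P s) (Q s) - min (P s) (Q s))"
    by (auto simp: fun_eq_iff)
  have iabs: "(\<lambda>s. \<bar>P s - Q s\<bar>) integrable_on {0..t}"
    unfolding absPQ by (rule integrable_diff[OF imax imin])
  have iFG: "(\<lambda>s. F s - G s) integrable_on {0..t}"
    by (rule integrable_diff[OF iF iG]) auto
  have pw: "\<bar>P s - Q s\<bar> \<le> F s - G s" if "s \<in> {0<..<t}" for s
  proof -
    have st: "s \<in> {0..tau}" using that t0 by auto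
    have "\<bar>y s - z s\<bar> \<le> d" by (rule hd[OF that])
    then have "y s - d \<le> z s" "z s \<le> y s + d" by auto
    then have "Q s \<le> F s" "G s \<le> Q s" using mono_x[OF st] by (auto simp: Q_def F_def G_def)
    moreover have "P s \<le> F s" "G s \<le> P s" using mono_x[OF st] d by (auto simp: P_def F_def G_def)
    ultimately show ?thesis by linarith
  qed
  have step1: "integral {0..t} (\<lambda>s. \<bar>P s - Q s\<bar>) \<le> integral {0..t} (\<lambda>s. F s - G s)"
  proof -
    have e: "integral {0..t} f = integral {0<..<t} f" for f :: "real \<Rightarrow> real"
      using integral_open_interval[of 0 t f] by (simp add: box_real)
    show ?thesis unfolding e
      using iabs iFG pw by (intro integral_le) (auto simp: integrable_on_open_interval_real)
  qed
  have Fle: "F s \<le> M" if "s \<in> {0..tau}" for s using M[OF that] by (simp add: F_def)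
  have Gge: "m \<le> G s" if "s \<in> {0..tau}" for s using m[OF that] by (simp add: G_def)
  have intF: "integral {a'..b'} F \<le> (b' - a') * M" if "0 \<le> a'" "a' \<le> b'" "b' \<le> t" for a' b'
  proof -
    have "integral {a'..b'} F \<le> integral {a'..b'} (\<lambda>_. M)"
      using iF[OF that(1,3)] Fle sub[OF that(1,3)] by (intro integral_le) auto
    then show ?thesis using that by simp
  qed
  have intG: "(b' - a') * m \<le> integral {a'..b'} G" if "0 \<le> a'" "a' \<le> b'" "b' \<le> t" for a' b'
  proof -
    have "integral {a'..b'} (\<lambda>_. m) \<le> integral {a'..b'} G"
      using iG[OF that(1,3)] Gge sub[OF that(1,3)] by (intro integral_le) auto
    then show ?thesis using that by simp
  qed
  have Mm: "m \<le> M" using Fle[of 0] Gge[of 0] Fd Gd mono_x[of 0 "-d" d] tau d y0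
    by (auto simp: F_def G_def)
  have step2: "integral {0..t} (\<lambda>s. F s - G s) \<le> h * (M - m)"
  proof (cases "t \<le> h")
    case True
    have "integral {0..t} (\<lambda>s. F s - G s) = integral {0..t} F - integral {0..t} G"
      by (rule integral_diff[OF iF iG]) auto
    also have "\<dots> \<le> t * M - t * m" using intF[of 0 t] intG[of 0 t] t0 by simp
    also have "\<dots> = t * (M - m)" by (simp add: algebra_simps)
    also have "\<dots> \<le> h * (M - m)" using True Mm by (intro mult_right_mono) auto
    finally show ?thesis .
  next
    case False
    have key: "F (h + s) \<le> G s" if "s \<in> {0..t-h}" for s
    proof -
      have cg: "lip_curve_slope_ge tau (a - eps) (\<lambda>r. y r + (-eps) * r + (eps * s + d))"
        by (rule curve_shift[OF y]) simp
      have A: "v (s + h) (y (s + h) + (-eps) * (s + h) + (eps * s + d)) \<le> v s (y s + (-eps) * s + (eps * s + d))"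
        using mono_curve[OF cg, of s "s + h"] that t0 h0 by auto
      have e1: "y (s + h) + (-eps) * (s + h) + (eps * s + d) = y (s + h) - d"
        using eh by (simp add: algebra_simps)
      have e2: "y s + (-eps) * s + (eps * s + d) = y s + d" by simp
      have B: "v (s + h) (y (s + h) - d) \<le> v s (y s + d)" using A unfolding e1 e2 .
      have "F (h + s) = F (s + h)" by (simp add: add.commute)
      then show ?thesis using B by (simp add: F_def G_def)
    qed
    have iFs: "(F \<circ> (+) h) integrable_on {0..t-h}"
      by (rule decr_integrable[where tau = "tau - h"]) (use Fd h0 t0 False in auto)
    have "integral {0..h} F + integral {h..t} F = integral {0..t} F"
      by (rule Henstock_Kurzweil_Integration.integral_combine) (use iF[of 0 t] h0 False t0 in auto)
    moreover have "integral {h..t} F = integral {0..t-h} (F \<circ> (+) h)"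
      using integral_shift_Icc_real[of 0 "t-h" F h] by simp
    moreover have "integral {0..t-h} (F \<circ> (+) h) \<le> integral {0..t-h} G"
      using iFs iG[of 0 "t-h"] key h0 by (intro integral_le) auto
    moreover have "integral {0..t-h} G + integral {t-h..t} G = integral {0..t} G"
      by (rule Henstock_Kurzweil_Integration.integral_combine) (use iG[of 0 t] h0 False t0 in auto)
    moreover have "integral {0..h} F \<le> h * M" using intF[of 0 h] h0 False by simp
    moreover have "h * m \<le> integral {t-h..t} G" using intG[of "t-h" t] h0 False by simp
    moreover have "integral {0..t} (\<lambda>s. F s - G s) = integral {0..t} F - integral {0..t} G"
      by (rule integral_diff[OF iF iG]) auto
    ultimately show ?thesis by (simp add: algebra_simps)
  qed
  have "h * (M - m) = 2 * d * (M - m) / eps" by (simp add: h_def)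
  then show ?thesis using step1 step2 by (simp add: P_def Q_def)
qed

theorem lemma4p1:
  fixes tau a eps :: real and v :: "real \<Rightarrow> real \<Rightarrow> real" and y z :: "real \<Rightarrow> real"
  assumes tau: "tau > 0" and eps: "eps > 0"
    and mono_x: "\<And>t x1 x2. t \<in> {0..tau} \<Longrightarrow> x1 \<le> x2 \<Longrightarrow> v t x2 \<le> v t x1"
    and mono_curve: "\<And>g s1 s2. lip_curve_slope_ge tau (a - eps) g \<Longrightarrow>
            s1 \<in> {0..tau} \<Longrightarrow> s2 \<in> {0..tau} \<Longrightarrow> s1 \<le> s2 \<Longrightarrow>
            v s2 (g s2) \<le> v s1 (g s1)"
    and y: "lip_curve_slope_ge tau a y" and z: "lip_curve_slope_ge tau a z"
    and y0: "y 0 = 0" and z0: "z 0 = 0"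
    and t: "t \<in> {0..tau}"
  shows "ereal (integral {0..t} (\<lambda>s. \<bar>v s (y s) - v s (z s)\<bar>))
           \<le> 2 * delta y z t * (vmax tau v - vmin tau v) / ereal eps"
proof -
  obtain Ly where Ly: "Ly-lipschitz_on {0..tau} y" using y unfolding lip_curve_slope_ge_def by blast
  obtain Lz where Lz: "Lz-lipschitz_on {0..tau} z" using z unfolding lip_curve_slope_ge_def by blast
  have t0: "0 \<le> t" "t \<le> tau" using t by auto
  have bnd: "\<bar>y s - z s\<bar> \<le> (Ly + Lz) * tau" if "s \<in> {0<..<t}" for s
  proof -
    have s: "s \<in> {0..tau}" "0 \<in> {0..tau}" using that t0 tau by auto
    have "\<bar>y s\<bar> \<le> Ly * \<bar>s\<bar>" using lipschitz_onD[OF Ly s] y0 by (simp add: dist_real_def)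
    moreover have "\<bar>z s\<bar> \<le> Lz * \<bar>s\<bar>" using lipschitz_onD[OF Lz s] z0 by (simp add: dist_real_def)
    moreover have "Ly * \<bar>s\<bar> \<le> Ly * tau" "Lz * \<bar>s\<bar> \<le> Lz * tau"
      using s lipschitz_on_nonneg[OF Ly] lipschitz_on_nonneg[OF Lz] by (auto intro: mult_left_mono)
    ultimately show ?thesis by (simp add: algebra_simps)
  qed
  define D where "D = delta y z t"
  have D0: "0 \<le> D" by (simp add: D_def delta_def)
  have Dup: "D \<le> ereal ((Ly + Lz) * tau)"
    unfolding D_def delta_def
  proof (rule max.boundedI)
    show "0 \<le> ereal ((Ly + Lz) * tau)"
      using tau lipschitz_on_nonneg[OF Ly] lipschitz_on_nonneg[OF Lz] by simp
    show "(SUP s\<in>{0<..<t}. ereal \<bar>y s - z s\<bar>) \<le> ereal ((Ly + Lz) * tau)"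
      using bnd by (intro SUP_least) simp
  qed
  have Dge: "ereal \<bar>y s - z s\<bar> \<le> D" if "s \<in> {0<..<t}" for s
    unfolding D_def delta_def using that by (intro max.coboundedI2 SUP_upper)
  obtain d where dD: "D = ereal d" using D0 Dup by (cases D) auto
  have d0: "0 \<le> d" using D0 dD by simp
  have hd: "\<bar>y s - z s\<bar> \<le> d" if "s \<in> {0<..<t}" for s using Dge[OF that] dD by simp
  have e: "integral {0..t} f = integral {0<..<t} f" for f :: "real \<Rightarrow> real"
    using integral_open_interval[of 0 t f] by (simp add: box_real)
  show ?thesis
  proof (cases "d = 0")
    case True
    have "integral {0<..<t} (\<lambda>s. \<bar>v s (y s) - v s (z s)\<bar>) = integral {0<..<t} (\<lambda>s. 0)"
      using hd True by (intro integral_cong) auto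
    then have "integral {0..t} (\<lambda>s. \<bar>v s (y s) - v s (z s)\<bar>) = 0" unfolding e by simp
    moreover have "delta y z t = 0" using True dD by (simp add: D_def zero_ereal_def)
    ultimately show ?thesis by (simp add: zero_ereal_def[symmetric])
  next
    case False
    then have dpos: "d > 0" using d0 by simp
    have vmax_ge: "ereal (v s x) \<le> vmax tau v" if "s \<in> {0..tau}" for s x
      unfolding vmax_def using that by (intro SUP_upper2[of "(s, x)"]) auto
    have vmin_le: "vmin tau v \<le> ereal (v s x)" if "s \<in> {0..tau}" for s x
      unfolding vmin_def using that by (intro INF_lower2[of "(s, x)"]) auto
    have "0 \<in> {0..tau}" using tau by simp
    from vmax_ge[OF this, of 0] vmin_le[OF this, of 0]
    have nm: "vmax tau v \<noteq> -\<infinity>" "vmin tau v \<noteq> \<infinity>" by auto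
    show ?thesis
    proof (cases "vmax tau v = \<infinity> \<or> vmin tau v = -\<infinity>")
      case True
      then have "vmax tau v - vmin tau v = \<infinity>" using nm by auto
      then have "2 * delta y z t * (vmax tau v - vmin tau v) / ereal eps = \<infinity>"
        using dpos dD eps by (simp add: D_def)
      then show ?thesis by simp
    next
      case False
      then obtain M m where MM: "vmax tau v = ereal M" and mm: "vmin tau v = ereal m"
        using nm by (cases "vmax tau v"; cases "vmin tau v") auto
      have "integral {0..t} (\<lambda>s. \<bar>v s (y s) - v s (z s)\<bar>) \<le> 2 * d * (M - m) / eps"
      proof (rule main_real[OF tau eps mono_x mono_curve y z y0 t dpos hd])
        show "v s (y s - d) \<le> M" if "s \<in> {0..tau}" for s using vmax_ge[OF that] MM by simp
        show "m \<le> v s (y s + d)" if "s \<in> {0..tau}" for s using vmin_le[OF that] mm by simp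
      qed
      then show ?thesis using MM mm dD eps by (simp add: D_def)
    qed
  qed
qed

end
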